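(* Let $\alpha,\beta,p^r,q_{max},M,B,\overline{v}>0$ with $4\alpha p^r>\beta^2$ and $\delta\in[0,1]$. Let $D_0:[0,\infty)\to\mathbb{R}$ be differentiable, concave and strictly increasing. Let $X$ be a cumulative distribution function with density $x>0$ on $(0,\overline{v})$ and support in $[0,\overline{v}]$, let $y$ be the inverse of the strictly decreasing bijection $p\mapsto MB(1-X(p))/p$ from $(0,\overline{v})$ onto $(0,\infty)$, and assume $D\mapsto D\,y(D)$ is concave and differentiable on $D>0$. For a side-payment price $p^t\ge0$, consider the problem in which the ISP chooses $(p^s,q)$ with $p^s\ge0$, $0<q\le q_{max}$, and the CP chooses investment $c$, with demand $D=D_0(c)-\alpha p^s+\beta q$ and utilities $U_{isp}=(p^s-p^r)D+(1-\delta)p^tD-p^rq^2$, $U_{cp}=y(D)D-p^tD-c$; a best strategy is a triple $(p^{s*},q^*,c^* )$ with $(p^{s*},q^* )$ maximizing $U_{isp}$ given $c^*$ and $c^*$ maximizing $U_{cp}$ given $(p^{s*},q^* )$. Let $0\le p^t_x<p^t_y$ and let $(p^{s*}_x,q^*_x,c^*_x)$ and $(p^{s*}_y,q^*_y,c^*_y)$ be best strategies for $p^t_x$ and $p^t_y$ respectively, each satisfying $p^{s*}>0$, $q^*>0$ (with $q^*<q_{max}$) and $c^*>0$. Then $c^*_x>c^*_y$; that is, the optimal investment of the CP is decreasing in the side-payment price.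
   Context: Advertisement model: the CP earns advertising revenue $y(D)D$ from user demand $D$ (where $y(D)$ is the optimal price per attention, determined by $MB(1-X(y(D)))/y(D)=D$ for $M$ advertisers with budget $B$ and valuation cdf $X$), invests $c$ in content raising potential demand to $D_0(c)$, and pays the ISP $p^t$ per unit of demand, taxed at rate $\delta$. The ISP sets user price $p^s$ and QoS $q$, paying $p^r$ per unit of bandwidth. *)

theory Defs
  imports "HOL-Analysis.Analysis"
begin

definition demand :: "(real \<Rightarrow> real) \<Rightarrow> real \<Rightarrow> real \<Rightarrow> real \<Rightarrow> real \<Rightarrow> real \<Rightarrow> real" where
  "demand D0 \<alpha> \<beta> ps q c = D0 c - \<alpha> * ps + \<beta> * q"

definition U_isp :: "(real \<Rightarrow> real) \<Rightarrow> real \<Rightarrow> real \<Rightarrow> real \<Rightarrow> real \<Rightarrow> real \<Rightarrow> real \<Rightarrow> real \<Rightarrow> real \<Rightarrow> real" where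
  "U_isp D0 \<alpha> \<beta> pr \<delta> pt ps q c =
     (let D = demand D0 \<alpha> \<beta> ps q c in (ps - pr) * D + (1 - \<delta>) * pt * D - pr * q^2)"

definition U_cp :: "(real \<Rightarrow> real) \<Rightarrow> (real \<Rightarrow> real) \<Rightarrow> real \<Rightarrow> real \<Rightarrow> real \<Rightarrow> real \<Rightarrow> real \<Rightarrow> real \<Rightarrow> real" where
  "U_cp D0 y \<alpha> \<beta> pt ps q c =
     (let D = demand D0 \<alpha> \<beta> ps q c in y D * D - pt * D - c)"

text \<open>Since y (hence the CP revenue) is only defined for positive demand, the CP's
  feasible investments are those producing positive demand.\<close>
definition best_strategy ::
  "(real \<Rightarrow> real) \<Rightarrow> (real \<Rightarrow> real) \<Rightarrow> real \<Rightarrow> real \<Rightarrow> real \<Rightarrow> real \<Rightarrow> real \<Rightarrow> real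
   \<Rightarrow> real \<Rightarrow> real \<Rightarrow> real \<Rightarrow> bool" where
  "best_strategy D0 y \<alpha> \<beta> pr \<delta> qmax pt ps q c \<longleftrightarrow>
     ps \<ge> 0 \<and> 0 < q \<and> q \<le> qmax \<and> c \<ge> 0 \<and> demand D0 \<alpha> \<beta> ps q c > 0 \<and>
     (\<forall>ps' q'. ps' \<ge> 0 \<and> 0 < q' \<and> q' \<le> qmax \<longrightarrow>
        U_isp D0 \<alpha> \<beta> pr \<delta> pt ps' q' c \<le> U_isp D0 \<alpha> \<beta> pr \<delta> pt ps q c) \<and>
     (\<forall>c'. c' \<ge> 0 \<and> demand D0 \<alpha> \<beta> ps q c' > 0 \<longrightarrow>
        U_cp D0 y \<alpha> \<beta> pt ps q c' \<le> U_cp D0 y \<alpha> \<beta> pt ps q c)"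

end

theory Submission
  imports Defs
begin

lemma concave_tangent:
  fixes f :: "real \<Rightarrow> real"
  assumes "concave_on A f" "connected A" "c \<in> interior A" "x \<in> A"
    "(f has_real_derivative f') (at c)"
  shows "f x - f c \<le> f' * (x - c)"
proof -
  have cv: "convex_on A (\<lambda>x. - f x)" using assms(1) by (simp add: concave_on_def)
  have dv: "((\<lambda>x. - f x) has_real_derivative - f') (at c within A)"
    using assms(5) by (intro DERIV_minus[THEN has_field_derivative_at_within])
  have "(\<lambda>x. - f x) x - (\<lambda>x. - f x) c \<ge> (- f') * (x - c)"
    by (rule convex_on_imp_above_tangent[OF cv assms(2,3,4) dv])
  thus ?thesis by simp
qed

lemma field_local_max:
  fixes f :: "real \<Rightarrow> real"
  assumes "(f has_real_derivative l) (at x)" "eventually (\<lambda>y. f y \<le> f x) (at x)"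
  shows "l = 0"
proof -
  have "(f has_derivative (*) l) (at x)" using assms(1) by (simp add: has_field_derivative_def)
  from has_derivative_local_max[OF this assms(2)] have "(*) l = (\<lambda>h. 0)" .
  then have "l * 1 = 0" by metis
  thus ?thesis by simp
qed

lemma foc:
  fixes \<alpha> \<beta> pr qmax \<delta> pt ps q c :: real and D0 y :: "real \<Rightarrow> real"
  assumes D0d: "(D0 has_real_derivative d0) (at c)"
    and Rd: "((\<lambda>D. D * y D) has_real_derivative r) (at (demand D0 \<alpha> \<beta> ps q c))"
    and bs: "best_strategy D0 y \<alpha> \<beta> pr \<delta> qmax pt ps q c"
    and int: "ps > 0" "q > 0" "q < qmax" "c > 0"
  shows "demand D0 \<alpha> \<beta> ps q c = \<alpha> * (ps - pr + (1-\<delta>)*pt)"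
    "\<beta> * (ps - pr + (1-\<delta>)*pt) = 2 * pr * q"
    "(r - pt) * d0 = 1"
proof -
  let ?D = "demand D0 \<alpha> \<beta> ps q c"
  let ?m = "ps - pr + (1-\<delta>)*pt"
  have isp: "\<And>ps' q'. ps' \<ge> 0 \<Longrightarrow> 0 < q' \<Longrightarrow> q' \<le> qmax \<Longrightarrow>
        U_isp D0 \<alpha> \<beta> pr \<delta> pt ps' q' c \<le> U_isp D0 \<alpha> \<beta> pr \<delta> pt ps q c"
    using bs unfolding best_strategy_def by blast
  have cp: "\<And>c'. c' \<ge> 0 \<Longrightarrow> demand D0 \<alpha> \<beta> ps q c' > 0 \<Longrightarrow>
        U_cp D0 y \<alpha> \<beta> pt ps q c' \<le> U_cp D0 y \<alpha> \<beta> pt ps q c"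
    using bs unfolding best_strategy_def by blast
  have Dpos: "?D > 0" using bs unfolding best_strategy_def by blast
  let ?f = "\<lambda>s. U_isp D0 \<alpha> \<beta> pr \<delta> pt s q c"
  have ff: "?f = (\<lambda>s. (s - pr + (1-\<delta>)*pt) * (D0 c - \<alpha> * s + \<beta> * q) - pr * q^2)"
    by (auto simp: U_isp_def demand_def Let_def algebra_simps)
  have "(?f has_real_derivative ((D0 c - \<alpha> * ps + \<beta> * q) + ?m * (- \<alpha>))) (at ps)"
    unfolding ff by (auto intro!: derivative_eq_intros)
  moreover have "eventually (\<lambda>s. ?f s \<le> ?f ps) (at ps)"
  proof -
    have "eventually (\<lambda>s. s > 0) (at ps)"
      using order_tendstoD(1)[OF tendsto_ident_at int(1)] .
    thus ?thesis by eventually_elim (use isp int in auto)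
  qed
  ultimately have e1: "(D0 c - \<alpha> * ps + \<beta> * q) + ?m * (- \<alpha>) = 0" by (rule field_local_max)
  thus "?D = \<alpha> * ?m" by (simp add: demand_def algebra_simps)
  let ?g = "\<lambda>t. U_isp D0 \<alpha> \<beta> pr \<delta> pt ps t c"
  have gg: "?g = (\<lambda>t. ?m * (D0 c - \<alpha> * ps + \<beta> * t) - pr * t^2)"
    by (auto simp: U_isp_def demand_def Let_def algebra_simps)
  have "(?g has_real_derivative (?m * \<beta> - pr * (2 * q))) (at q)"
    unfolding gg by (auto intro!: derivative_eq_intros)
  moreover have "eventually (\<lambda>t. ?g t \<le> ?g q) (at q)"
  proof -
    have "eventually (\<lambda>t. t > 0) (at q)"
      using order_tendstoD(1)[OF tendsto_ident_at int(2)] .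
    moreover have "eventually (\<lambda>t. t < qmax) (at q)"
      using order_tendstoD(2)[OF tendsto_ident_at int(3)] .
    ultimately show ?thesis by eventually_elim (use isp int in auto)
  qed
  ultimately have "?m * \<beta> - pr * (2 * q) = 0" by (rule field_local_max)
  thus "\<beta> * ?m = 2 * pr * q" by (simp add: algebra_simps)
  let ?K = "- \<alpha> * ps + \<beta> * q"
  let ?R = "\<lambda>D. D * y D"
  let ?h = "\<lambda>c'. U_cp D0 y \<alpha> \<beta> pt ps q c'"
  have hh: "?h = (\<lambda>c'. ?R (D0 c' + ?K) - pt * (D0 c' + ?K) - c')"
    by (auto simp: U_cp_def demand_def Let_def algebra_simps)
  have DK: "D0 c + ?K = ?D" by (simp add: demand_def)
  have inner: "((\<lambda>c'. D0 c' + ?K) has_real_derivative d0) (at c)"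
    using D0d by (auto intro!: derivative_eq_intros)
  have Rd': "(?R has_real_derivative r) (at (D0 c + ?K))" using Rd DK by simp
  have H1: "((\<lambda>c'. ?R (D0 c' + ?K)) has_real_derivative r * d0) (at c)"
    using DERIV_chain2[OF Rd' inner] by simp
  have "(?h has_real_derivative (r * d0 - pt * d0 - 1)) (at c)"
    unfolding hh using DERIV_diff[OF DERIV_diff[OF H1 DERIV_cmult[OF inner, of pt]] DERIV_ident]
    by simp
  moreover have "eventually (\<lambda>c'. ?h c' \<le> ?h c) (at c)"
  proof -
    have "eventually (\<lambda>t. t > 0) (at c)"
      using order_tendstoD(1)[OF tendsto_ident_at int(4)] .
    moreover have "isCont (\<lambda>c'. D0 c' + ?K) c"
      using inner by (rule DERIV_isCont)
    then have "((\<lambda>c'. D0 c' + ?K) \<longlongrightarrow> ?D) (at c)"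
      using DK by (simp add: isCont_def)
    then have "eventually (\<lambda>t. D0 t + ?K > 0) (at c)"
      using order_tendstoD(1) Dpos by blast
    ultimately show ?thesis
    proof eventually_elim
      case (elim t)
      then show ?case using cp[of t] by (simp add: demand_def)
    qed
  qed
  ultimately have "r * d0 - pt * d0 - 1 = 0" by (rule field_local_max)
  thus "(r - pt) * d0 = 1" by (simp add: algebra_simps)
qed

theorem lemma6:
  fixes \<alpha> \<beta> pr qmax M B vbar \<delta> :: real
    and D0 X x y :: "real \<Rightarrow> real"
    and ptx pty psx qx cx psy qy cy :: real
  assumes pos: "\<alpha> > 0" "\<beta> > 0" "pr > 0" "qmax > 0" "M > 0" "B > 0" "vbar > 0"
    and disc: "4 * \<alpha> * pr > \<beta>^2"
    and delta: "0 \<le> \<delta>" "\<delta> \<le> 1"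
    and D0_diff: "\<And>c. c \<ge> 0 \<Longrightarrow> D0 differentiable (at c within {0..})"
    and D0_concave: "concave_on {0..} D0"
    and D0_incr: "strict_mono_on {0..} D0"
    and X_low: "\<And>t. t \<le> 0 \<Longrightarrow> X t = 0"
    and X_high: "\<And>t. t \<ge> vbar \<Longrightarrow> X t = 1"
    and X_cont: "continuous_on UNIV X"
    and X_dens: "\<And>t. 0 < t \<Longrightarrow> t < vbar \<Longrightarrow> (X has_real_derivative x t) (at t)"
    and x_pos: "\<And>t. 0 < t \<Longrightarrow> t < vbar \<Longrightarrow> x t > 0"
    and y_range: "\<And>D. D > 0 \<Longrightarrow> 0 < y D \<and> y D < vbar"
    and y_inv: "\<And>D. D > 0 \<Longrightarrow> M * B * (1 - X (y D)) / y D = D"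
    and rev_concave: "concave_on {0<..} (\<lambda>D. D * y D)"
    and rev_diff: "\<And>D. D > 0 \<Longrightarrow> (\<lambda>D. D * y D) differentiable (at D)"
    and pt: "0 \<le> ptx" "ptx < pty"
    and bx: "best_strategy D0 y \<alpha> \<beta> pr \<delta> qmax ptx psx qx cx"
    and by': "best_strategy D0 y \<alpha> \<beta> pr \<delta> qmax pty psy qy cy"
    and int_x: "psx > 0" "qx > 0" "qx < qmax" "cx > 0"
    and int_y: "psy > 0" "qy > 0" "qy < qmax" "cy > 0"
  shows "cx > cy"
proof (rule ccontr)
  assume "\<not> cx > cy"
  hence cle: "cx \<le> cy" by simp
  let ?R = "\<lambda>D. D * y D"
  have intr: "interior {0::real..} = {0<..}" by simp
  have D0der: "(D0 has_real_derivative deriv D0 c) (at c)" if "c > 0" for c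
  proof -
    have "D0 differentiable (at c within {0..})" using D0_diff that by simp
    moreover have "at c within {0::real..} = at c"
      using that by (intro at_within_interior) (simp add: intr)
    ultimately show ?thesis by (simp add: DERIV_deriv_iff_real_differentiable)
  qed
  have Rder: "(?R has_real_derivative deriv ?R D) (at D)" if "D > 0" for D
    using rev_diff[OF that] by (simp add: DERIV_deriv_iff_real_differentiable)
  define Dx where "Dx = demand D0 \<alpha> \<beta> psx qx cx"
  define Dy where "Dy = demand D0 \<alpha> \<beta> psy qy cy"
  have Dxp: "Dx > 0" using bx unfolding best_strategy_def Dx_def by blast
  have Dyp: "Dy > 0" using by' unfolding best_strategy_def Dy_def by blast
  note fx = foc[OF D0der[OF int_x(4)] Rder[OF Dxp[unfolded Dx_def]] bx int_x]
  note fy = foc[OF D0der[OF int_y(4)] Rder[OF Dyp[unfolded Dy_def]] by' int_y]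
  define mx where "mx = psx - pr + (1-\<delta>)*ptx"
  define my where "my = psy - pr + (1-\<delta>)*pty"
  have ex1: "Dx = \<alpha> * mx" "\<beta> * mx = 2 * pr * qx" "Dx = D0 cx - \<alpha> * psx + \<beta> * qx"
    using fx unfolding Dx_def mx_def demand_def by auto
  have ey1: "Dy = \<alpha> * my" "\<beta> * my = 2 * pr * qy" "Dy = D0 cy - \<alpha> * psy + \<beta> * qy"
    using fy unfolding Dy_def my_def demand_def by auto
  have kx: "(4*\<alpha>*pr - \<beta>^2) * mx = 2*pr*(D0 cx - \<alpha>*pr + \<alpha>*(1-\<delta>)*ptx)"
  proof -
    have "2*pr*Dx = 2*pr*D0 cx - 2*pr*\<alpha>*psx + \<beta>*(2*pr*qx)" by (subst ex1(3)) (simp add: algebra_simps)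
    also have "\<dots> = 2*pr*D0 cx - 2*pr*\<alpha>*(mx + pr - (1-\<delta>)*ptx) + \<beta>*(\<beta>*mx)"
      using ex1(2) unfolding mx_def by simp
    finally show ?thesis using ex1(1) by (simp add: algebra_simps power2_eq_square)
  qed
  have ky: "(4*\<alpha>*pr - \<beta>^2) * my = 2*pr*(D0 cy - \<alpha>*pr + \<alpha>*(1-\<delta>)*pty)"
  proof -
    have "2*pr*Dy = 2*pr*D0 cy - 2*pr*\<alpha>*psy + \<beta>*(2*pr*qy)" by (subst ey1(3)) (simp add: algebra_simps)
    also have "\<dots> = 2*pr*D0 cy - 2*pr*\<alpha>*(my + pr - (1-\<delta>)*pty) + \<beta>*(\<beta>*my)"
      using ey1(2) unfolding my_def by simp
    finally show ?thesis using ey1(1) by (simp add: algebra_simps power2_eq_square)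
  qed
  have D0le: "D0 cx \<le> D0 cy"
  proof (cases "cx = cy")
    case False
    with cle have "cx < cy" by simp
    hence "D0 cx < D0 cy" using D0_incr int_x(4) int_y(4) by (simp add: strict_mono_on_def)
    thus ?thesis by simp
  qed simp
  have "\<alpha>*(1-\<delta>)*ptx \<le> \<alpha>*(1-\<delta>)*pty"
    using pos(1) delta pt by (intro mult_left_mono) auto
  hence "(4*\<alpha>*pr - \<beta>^2) * mx \<le> (4*\<alpha>*pr - \<beta>^2) * my"
    unfolding kx ky using D0le pos(3) by (intro mult_left_mono) auto
  hence "mx \<le> my" using disc by (simp add: mult_le_cancel_left)
  hence DxDy: "Dx \<le> Dy" using ex1(1) ey1(1) pos(1) by simp
  have cr: "connected {0::real<..}" by (simp add: connected_Ioi)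
  have t1: "?R Dy - ?R Dx \<le> deriv ?R Dx * (Dy - Dx)"
    by (rule concave_tangent[OF rev_concave cr _ _ Rder]) (use Dxp Dyp in \<open>auto simp: interior_open\<close>)
  have t2: "?R Dx - ?R Dy \<le> deriv ?R Dy * (Dx - Dy)"
    by (rule concave_tangent[OF rev_concave cr _ _ Rder]) (use Dxp Dyp in \<open>auto simp: interior_open\<close>)
  have Rle: "deriv ?R Dy \<le> deriv ?R Dx"
  proof (cases "Dx = Dy")
    case True thus ?thesis by simp
  next
    case False
    with DxDy have "Dy - Dx > 0" by simp
    moreover have "(deriv ?R Dy - deriv ?R Dx) * (Dy - Dx) \<le> 0"
      using t1 t2 by (simp add: algebra_simps)
    ultimately show ?thesis by (simp add: mult_le_0_iff)
  qed
  have c0: "connected {0::real..}" by (simp add: connected_Ici)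
  have s1: "D0 cy - D0 cx \<le> deriv D0 cx * (cy - cx)"
    by (rule concave_tangent[OF D0_concave c0 _ _ D0der]) (use int_x(4) int_y(4) in \<open>auto simp: intr\<close>)
  have s2: "D0 cx - D0 cy \<le> deriv D0 cy * (cx - cy)"
    by (rule concave_tangent[OF D0_concave c0 _ _ D0der]) (use int_x(4) int_y(4) in \<open>auto simp: intr\<close>)
  have dle: "deriv D0 cy \<le> deriv D0 cx"
  proof (cases "cx = cy")
    case True thus ?thesis by simp
  next
    case False
    with cle have "cy - cx > 0" by simp
    moreover have "(deriv D0 cy - deriv D0 cx) * (cy - cx) \<le> 0"
      using s1 s2 by (simp add: algebra_simps)
    ultimately show ?thesis by (simp add: mult_le_0_iff)
  qed
  have s3: "D0 (cy+1) - D0 cy \<le> deriv D0 cy * (cy + 1 - cy)"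
    by (rule concave_tangent[OF D0_concave c0 _ _ D0der]) (use int_y(4) in \<open>auto simp: intr\<close>)
  have "D0 cy < D0 (cy+1)" using D0_incr int_y(4) by (auto simp: strict_mono_on_def)
  hence dpos: "deriv D0 cy > 0" using s3 by simp
  have eqx: "(deriv ?R Dx - ptx) * deriv D0 cx = 1" using fx(3) unfolding Dx_def .
  have eqy: "(deriv ?R Dy - pty) * deriv D0 cy = 1" using fy(3) unfolding Dy_def .
  have lt: "deriv ?R Dy - pty < deriv ?R Dx - ptx" using Rle pt by simp
  show False
  proof (cases "deriv ?R Dy - pty > 0")
    case True
    have "(deriv ?R Dy - pty) * deriv D0 cy \<le> (deriv ?R Dy - pty) * deriv D0 cx"
      using True dle by (intro mult_left_mono) auto
    also have "\<dots> < (deriv ?R Dx - ptx) * deriv D0 cx"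
      using lt dpos dle by (intro mult_strict_right_mono) auto
    finally show False using eqx eqy by simp
  next
    case False
    hence "(deriv ?R Dy - pty) * deriv D0 cy \<le> 0" using dpos by (simp add: mult_le_0_iff)
    thus False using eqy by simp
  qed
qed

end
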